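(* Let $r\ge1$ and $n_1,m_1,\ldots,n_r,m_r\ge1$ be integers with $n_1+\cdots+n_r=m_1+\cdots+m_r$, let $\mathbf{S}=(1^{n_1},\ast^{m_1},\ldots,1^{n_r},\ast^{m_r})$, and let $i=\min\{n_1,m_1,\ldots,n_r,m_r\}$. Then \[ |NC_2(\mathbf{S})|\ge(1+i)^{r-1}. \]
   Context: $1^{k}$ denotes $k$ consecutive entries equal to $1$ (similarly $\ast^k$), so $\mathbf{S}$ is a string of length $N=2(n_1+\cdots+n_r)$ in the symbols $1,\ast$ with $r$ runs. $NC_2(\mathbf{S})$ is the set of non-crossing pairings of $\{1,\ldots,N\}$ in which every pair joins a position carrying $1$ with a position carrying $\ast$ in $\mathbf{S}$. *)

theory Defs
  imports Main
begin

text \<open>The string S is a list of booleans: True stands for the symbol 1,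
  False for the symbol *. Positions are 0,...,length S - 1.\<close>

definition word_S :: "nat list \<Rightarrow> nat list \<Rightarrow> bool list" where
  "word_S ns ms = concat (map (\<lambda>k. replicate (ns ! k) True @ replicate (ms ! k) False)
                              [0..<length ns])"

definition is_pairing :: "nat \<Rightarrow> (nat \<times> nat) set \<Rightarrow> bool" where
  "is_pairing N P \<longleftrightarrow>
     (\<forall>(a, b) \<in> P. a < b \<and> b < N) \<and>
     (\<forall>x < N. \<exists>!p \<in> P. fst p = x \<or> snd p = x)"

definition non_crossing :: "(nat \<times> nat) set \<Rightarrow> bool" where
  "non_crossing P \<longleftrightarrow>
     (\<forall>(a, b) \<in> P. \<forall>(c, d) \<in> P. \<not> (a < c \<and> c < b \<and> b < d))"

definition NC2 :: "bool list \<Rightarrow> (nat \<times> nat) set set" where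
  "NC2 S = {P. is_pairing (length S) P \<and> non_crossing P \<and>
               (\<forall>(a, b) \<in> P. S ! a \<noteq> S ! b)}"

end

theory Submission
  imports Defs
begin

lemma is_pairing_iff:
  "is_pairing N P \<longleftrightarrow>
     (\<forall>(a, b) \<in> P. a < b \<and> b < N) \<and>
     (\<forall>x < N. \<exists>p \<in> P. fst p = x \<or> snd p = x) \<and>
     (\<forall>x < N. \<forall>p\<in>P. \<forall>q\<in>P. (fst p = x \<or> snd p = x) \<longrightarrow> (fst q = x \<or> snd q = x) \<longrightarrow> p = q)"
  unfolding is_pairing_def by blast

lemma pairing_bound: "is_pairing N P \<Longrightarrow> (a,b) \<in> P \<Longrightarrow> a < b \<and> b < N"
  unfolding is_pairing_iff by blast

lemma pairing_no_both:
  assumes "is_pairing N P" "(x,e) \<in> P" "(d,x) \<in> P"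
  shows False
proof -
  have lt: "d < x" "x < N" "x < e" using pairing_bound[OF assms(1)] assms(2,3) by blast+
  have u: "\<forall>p\<in>P. \<forall>q\<in>P. (fst p = x \<or> snd p = x) \<longrightarrow> (fst q = x \<or> snd q = x) \<longrightarrow> p = q"
    using assms(1) lt(2) unfolding is_pairing_iff by blast
  have "(x,e) = (d,x)" using u[rule_format, OF assms(2,3)] by simp
  thus False using lt by simp
qed

lemma finite_NC2: "finite (NC2 w)"
proof -
  have "NC2 w \<subseteq> Pow ({..<length w} \<times> {..<length w})"
    unfolding NC2_def using pairing_bound by fastforce
  thus ?thesis by (rule finite_subset) auto
qed
definition nestP :: "nat \<Rightarrow> (nat\<times>nat) set" where
  "nestP k = (\<lambda>s. (s, 2*k-1-s)) ` {..<k}"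

lemma nth_rep2: "p < 2*k \<Longrightarrow> (replicate k X @ replicate k Y) ! p = (if p < k then X else Y)"
  by (auto simp: nth_append)

lemma nest_NC2: "nestP k \<in> NC2 (replicate k X @ replicate k (\<not>X))"
proof -
  have pr: "is_pairing (2*k) (nestP k)"
    unfolding is_pairing_iff nestP_def
  proof (intro conjI allI impI)
    fix x assume x: "x < 2*k"
    show "\<exists>p\<in>(\<lambda>s. (s, 2 * k - 1 - s)) ` {..<k}. fst p = x \<or> snd p = x"
    proof (cases "x < k")
      case True thus ?thesis by force
    next
      case False
      hence "(2*k-1-x, 2*k-1-(2*k-1-x)) \<in> (\<lambda>s. (s, 2 * k - 1 - s)) ` {..<k}" using x by force
      moreover have "2*k-1-(2*k-1-x) = x" using x False by simp
      ultimately show ?thesis by force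
    qed
  qed auto
  have nc: "non_crossing (nestP k)" unfolding non_crossing_def nestP_def by auto
  have lab: "\<forall>(a, b) \<in> nestP k. (replicate k X @ replicate k (\<not>X)) ! a \<noteq> (replicate k X @ replicate k (\<not>X)) ! b"
    unfolding nestP_def by (auto simp: nth_rep2)
  show ?thesis unfolding NC2_def using pr nc lab by (simp add: mult_2)
qed



definition sh :: "nat \<Rightarrow> nat \<Rightarrow> nat \<Rightarrow> nat" where
  "sh L m p = (if p < L then p else p + m)"

definition insP :: "nat \<Rightarrow> nat \<Rightarrow> (nat\<times>nat) set \<Rightarrow> (nat\<times>nat) set \<Rightarrow> (nat\<times>nat) set" where
  "insP L m P Z = map_prod (sh L m) (sh L m) ` P \<union> map_prod (\<lambda>a. a + L) (\<lambda>a. a + L) ` Z"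

lemma sh_mono: "a < b \<Longrightarrow> sh L m a < sh L m b" by (auto simp: sh_def)
lemma sh_less_iff: "sh L m a < sh L m b \<longleftrightarrow> a < b" by (auto simp: sh_def)
lemma sh_inj: "inj (sh L m)" unfolding inj_def sh_def by auto
lemma sh_eq_iff: "sh L m a = sh L m b \<longleftrightarrow> a = b" using sh_inj by (auto simp: inj_def)
lemma sh_out: "sh L m a < L \<or> L + m \<le> sh L m a" by (auto simp: sh_def)

lemma nth_sh: "a < length u + length v \<Longrightarrow> (u @ z @ v) ! sh (length u) (length z) a = (u @ v) ! a"
  by (auto simp: sh_def nth_append)
lemma nth_mid: "c < length z \<Longrightarrow> (u @ z @ v) ! (c + length u) = z ! c"
  by (auto simp: nth_append)

lemma ins_NC2:
  assumes P: "P \<in> NC2 (u @ v)" and Z: "Z \<in> NC2 z"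
  shows "insP (length u) (length z) P Z \<in> NC2 (u @ z @ v)"
proof -
  define L where "L = length u"
  define m where "m = length z"
  define s where "s = sh L m"
  define Q where "Q = insP L m P Z"
  have Pp: "is_pairing (length u + length v) P" and Pnc: "non_crossing P"
    and Plab: "\<forall>(a, b) \<in> P. (u@v) ! a \<noteq> (u@v) ! b" using P unfolding NC2_def by auto
  have Zp: "is_pairing m Z" and Znc: "non_crossing Z"
    and Zlab: "\<forall>(a, b) \<in> Z. z ! a \<noteq> z ! b" using Z unfolding NC2_def m_def by auto
  have Pb: "\<And>a b. (a,b) \<in> P \<Longrightarrow> a < b \<and> b < L + length v"
    using Pp unfolding is_pairing_def L_def by fastforce
  have Zb: "\<And>a b. (a,b) \<in> Z \<Longrightarrow> a < b \<and> b < m"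
    using Zp unfolding is_pairing_def by fastforce
  have Q: "Q = map_prod s s ` P \<union> map_prod (\<lambda>a. a + L) (\<lambda>a. a + L) ` Z"
    unfolding Q_def insP_def s_def by simp
  have sout: "\<And>a. s a < L \<or> L + m \<le> s a" unfolding s_def by (rule sh_out)
  have sl: "\<And>a b. s a < s b \<longleftrightarrow> a < b" unfolding s_def by (rule sh_less_iff)
  have se: "\<And>a b. s a = s b \<longleftrightarrow> a = b" unfolding s_def by (rule sh_eq_iff)
  let ?N = "length (u @ z @ v)"
  have N: "?N = L + m + length v" unfolding L_def m_def by simp
  have sbound: "\<And>b. b < L + length v \<Longrightarrow> s b < L + m + length v" unfolding s_def sh_def by auto
  have part1: "\<forall>(a, b) \<in> Q. a < b \<and> b < ?N"
    unfolding Q N using Pb Zb sl sbound by fastforce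
  have part2: "\<forall>x < ?N. \<exists>p \<in> Q. fst p = x \<or> snd p = x"
  proof (intro allI impI)
    fix x assume x: "x < ?N"
    show "\<exists>p \<in> Q. fst p = x \<or> snd p = x"
    proof (cases "x < L \<or> L + m \<le> x")
      case True
      define x0 where "x0 = (if x < L then x else x - m)"
      have sx: "s x0 = x" using True unfolding x0_def s_def sh_def by auto
      have x0: "x0 < L + length v" using True x N unfolding x0_def by auto
      then obtain p where "p \<in> P" "fst p = x0 \<or> snd p = x0"
        using Pp unfolding is_pairing_iff L_def by blast
      thus ?thesis using sx unfolding Q by (intro bexI[of _ "map_prod s s p"]) (auto simp: map_prod_def split: prod.splits)
    next
      case False
      hence "x - L < m" by auto
      then obtain p where "p \<in> Z" "fst p = x - L \<or> snd p = x - L"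
        using Zp unfolding is_pairing_iff by blast
      thus ?thesis using False unfolding Q
        by (intro bexI[of _ "map_prod (\<lambda>a. a + L) (\<lambda>a. a + L) p"]) (auto simp: map_prod_def split: prod.splits)
    qed
  qed
  have part3: "\<forall>x < ?N. \<forall>p\<in>Q. \<forall>q\<in>Q. (fst p = x \<or> snd p = x) \<longrightarrow> (fst q = x \<or> snd q = x) \<longrightarrow> p = q"
  proof (intro allI impI ballI)
    fix x p q assume x: "x < ?N" and pQ: "p \<in> Q" and qQ: "q \<in> Q"
      and px: "fst p = x \<or> snd p = x" and qx: "fst q = x \<or> snd q = x"
    show "p = q"
    proof (cases "x < L \<or> L + m \<le> x")
      case True
      have inP: "\<And>r. r \<in> Q \<Longrightarrow> (fst r = x \<or> snd r = x) \<Longrightarrow> \<exists>r0\<in>P. r = map_prod s s r0"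
      proof -
        fix r
        assume r: "r \<in> Q" "fst r = x \<or> snd r = x"
        show "\<exists>r0\<in>P. r = map_prod s s r0"
        proof (rule ccontr)
          assume "\<not> (\<exists>r0\<in>P. r = map_prod s s r0)"
          hence "r \<in> map_prod (\<lambda>a. a + L) (\<lambda>a. a + L) ` Z" using r(1) unfolding Q by (auto simp: image_iff)
          then obtain a0 b0 where "(a0,b0) \<in> Z" "r = (a0+L, b0+L)" by auto
          thus False using Zb[of a0 b0] r(2) True by auto
        qed
      qed
      obtain p0 where p0: "p0 \<in> P" "p = map_prod s s p0" using inP pQ px by blast
      obtain q0 where q0: "q0 \<in> P" "q = map_prod s s q0" using inP qQ qx by blast
      define x0 where "x0 = (if x < L then x else x - m)"
      have sx: "s x0 = x" using True unfolding x0_def s_def sh_def by auto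
      have x0: "x0 < L + length v" using True x N unfolding x0_def by auto
      have "fst p0 = x0 \<or> snd p0 = x0" using px p0 sx se by (cases p0) auto
      moreover have "fst q0 = x0 \<or> snd q0 = x0" using qx q0 sx se by (cases q0) auto
      ultimately have "p0 = q0" using Pp p0 q0 x0 unfolding is_pairing_iff L_def by blast
      thus ?thesis using p0 q0 by simp
    next
      case False
      have inZ: "\<And>r. r \<in> Q \<Longrightarrow> (fst r = x \<or> snd r = x) \<Longrightarrow> \<exists>r0\<in>Z. r = map_prod (\<lambda>a. a + L) (\<lambda>a. a + L) r0"
      proof -
        fix r assume r: "r \<in> Q" "fst r = x \<or> snd r = x"
        show "\<exists>r0\<in>Z. r = map_prod (\<lambda>a. a + L) (\<lambda>a. a + L) r0"
        proof (rule ccontr)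
          assume "\<not> (\<exists>r0\<in>Z. r = map_prod (\<lambda>a. a + L) (\<lambda>a. a + L) r0)"
          hence "r \<in> map_prod s s ` P" using r(1) unfolding Q by (auto simp: image_iff)
          then obtain a0 b0 where "r = (s a0, s b0)" by auto
          thus False using sout[of a0] sout[of b0] r(2) False by auto
        qed
      qed
      obtain p0 where p0: "p0 \<in> Z" "p = map_prod (\<lambda>a. a + L) (\<lambda>a. a + L) p0" using inZ pQ px by blast
      obtain q0 where q0: "q0 \<in> Z" "q = map_prod (\<lambda>a. a + L) (\<lambda>a. a + L) q0" using inZ qQ qx by blast
      have x0: "x - L < m" using False by auto
      have "fst p0 = x - L \<or> snd p0 = x - L" using px p0 False by (cases p0) auto
      moreover have "fst q0 = x - L \<or> snd q0 = x - L" using qx q0 False by (cases q0) auto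
      ultimately have "p0 = q0" using Zp p0 q0 x0 unfolding is_pairing_iff by blast
      thus ?thesis using p0 q0 by simp
    qed
  qed
  have nc: "non_crossing Q"
    unfolding non_crossing_def
  proof (intro ballI, clarify)
    fix a b c d assume ab: "(a,b) \<in> Q" and cd: "(c,d) \<in> Q" and cr: "a < c" "c < b" "b < d"
    show False
    proof -
      { assume a1: "(a,b) \<in> map_prod s s ` P" and c1: "(c,d) \<in> map_prod s s ` P"
        then obtain a0 b0 c0 d0 where o: "(a0,b0) \<in> P" "(c0,d0) \<in> P" "a = s a0" "b = s b0" "c = s c0" "d = s d0"
          by auto
        have "\<not> (a0 < c0 \<and> c0 < b0 \<and> b0 < d0)" using Pnc o(1,2) unfolding non_crossing_def by fast
        hence False using cr o(3-6) sl by metis }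
      moreover
      { assume a1: "(a,b) \<notin> map_prod s s ` P" and c1: "(c,d) \<notin> map_prod s s ` P"
        hence "(a,b) \<in> map_prod (\<lambda>a. a + L) (\<lambda>a. a + L) ` Z" "(c,d) \<in> map_prod (\<lambda>a. a + L) (\<lambda>a. a + L) ` Z"
          using ab cd unfolding Q by auto
        then obtain a0 b0 c0 d0 where o: "(a0,b0) \<in> Z" "(c0,d0) \<in> Z" "a = a0 + L" "b = b0 + L" "c = c0 + L" "d = d0 + L"
          by auto
        have "\<not> (a0 < c0 \<and> c0 < b0 \<and> b0 < d0)" using Znc o(1,2) unfolding non_crossing_def by fast
        hence False using cr o(3-6) by simp }
      moreover
      { assume a1: "(a,b) \<in> map_prod s s ` P" and c1: "(c,d) \<notin> map_prod s s ` P"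
        hence "(c,d) \<in> map_prod (\<lambda>a. a + L) (\<lambda>a. a + L) ` Z" using cd unfolding Q by auto
        then obtain c0 d0 where "(c0,d0) \<in> Z" "c = c0 + L" "d = d0 + L" by auto
        hence "L \<le> c" "d < L + m" using Zb by auto
        moreover from a1 obtain b0 where "b = s b0" by auto
        ultimately have False using cr sout[of b0] by auto }
      moreover
      { assume a1: "(a,b) \<notin> map_prod s s ` P" and c1: "(c,d) \<in> map_prod s s ` P"
        hence "(a,b) \<in> map_prod (\<lambda>a. a + L) (\<lambda>a. a + L) ` Z" using ab unfolding Q by auto
        then obtain a0 b0 where "(a0,b0) \<in> Z" "a = a0 + L" "b = b0 + L" by auto
        hence "L \<le> a" "b < L + m" using Zb by auto
        moreover from c1 obtain c0 where "c = s c0" by auto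
        ultimately have False using cr sout[of c0] by auto }
      ultimately show False by (cases "(a,b) \<in> map_prod s s ` P"; cases "(c,d) \<in> map_prod s s ` P") simp_all
    qed
  qed
  have lab: "\<forall>(a, b) \<in> Q. (u@z@v) ! a \<noteq> (u@z@v) ! b"
  proof clarify
    fix a b assume ab: "(a,b) \<in> Q" and eq: "(u@z@v) ! a = (u@z@v) ! b"
    show False
    proof (cases "(a,b) \<in> map_prod s s ` P")
      case True
      then obtain a0 b0 where o: "(a0,b0) \<in> P" "a = s a0" "b = s b0" by auto
      have "a0 < length u + length v" "b0 < length u + length v" using Pb[OF o(1)] unfolding L_def by auto
      hence "(u@z@v)!a = (u@v)!a0" "(u@z@v)!b = (u@v)!b0" using nth_sh o(2,3) unfolding s_def L_def m_def by auto
      moreover have "(u@v)!a0 \<noteq> (u@v)!b0" using Plab o(1) by fast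
      ultimately show False using eq by simp
    next
      case False
      hence "(a,b) \<in> map_prod (\<lambda>a. a + L) (\<lambda>a. a + L) ` Z" using ab unfolding Q by auto
      then obtain a0 b0 where o: "(a0,b0) \<in> Z" "a = a0 + L" "b = b0 + L" by auto
      have "a0 < length z" "b0 < length z" using Zb[OF o(1)] unfolding m_def by auto
      hence "(u@z@v)!a = z!a0" "(u@z@v)!b = z!b0" using nth_mid o(2,3) unfolding L_def by auto
      moreover have "z!a0 \<noteq> z!b0" using Zlab o(1) by fast
      ultimately show False using eq by simp
    qed
  qed
  have "is_pairing ?N Q" unfolding is_pairing_iff using part1 part2 part3 by blast
  thus ?thesis unfolding NC2_def Q_def L_def m_def using nc lab Q_def L_def m_def by simp
qed



lemma insP_inj:
  assumes "\<forall>(a,b)\<in>Z. a < m" and "insP L m P1 Z = insP L m P2 Z"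
  shows "P1 = P2"
proof -
  have key: "\<And>P. map_prod (sh L m) (sh L m) ` P = {q \<in> insP L m P Z. fst q < L \<or> L + m \<le> fst q}"
  proof -
    fix P
    show "map_prod (sh L m) (sh L m) ` P = {q \<in> insP L m P Z. fst q < L \<or> L + m \<le> fst q}"
      unfolding insP_def using assms(1) sh_out by fastforce
  qed
  have "map_prod (sh L m) (sh L m) ` P1 = map_prod (sh L m) (sh L m) ` P2"
    using key[of P1] key[of P2] assms(2) by simp
  moreover have "inj (map_prod (sh L m) (sh L m))" using sh_inj by (intro prod.inj_map)
  ultimately show ?thesis by (simp add: inj_image_eq_iff)
qed

definition ZZ :: "nat \<Rightarrow> nat \<Rightarrow> (nat\<times>nat) set" where
  "ZZ j b = insP (2*j) (2*(b-j)) (nestP j) (nestP (b-j))"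

lemma ZZ_NC2:
  assumes "j \<le> b"
  shows "ZZ j b \<in> NC2 (replicate j X @ replicate j (\<not>X) @ replicate (b-j) (\<not>X) @ replicate (b-j) X)"
proof -
  have "insP (length (replicate j X @ replicate j (\<not>X))) (length (replicate (b-j) (\<not>X) @ replicate (b-j) (\<not>\<not>X)))
          (nestP j) (nestP (b-j))
        \<in> NC2 ((replicate j X @ replicate j (\<not>X)) @ (replicate (b-j) (\<not>X) @ replicate (b-j) (\<not>\<not>X)) @ [])"
    by (rule ins_NC2) (use nest_NC2[of j X] nest_NC2[of "b-j" "\<not>X"] in auto)
  thus ?thesis unfolding ZZ_def by (simp add: mult_2)
qed

lemma ZZ_fst: "j < b \<Longrightarrow> (2*j, 2*b-1) \<in> ZZ j b"
proof -
  assume jb: "j < b"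
  have "(0, 2*(b-j)-1-0) \<in> nestP (b-j)" unfolding nestP_def using jb by force
  hence "map_prod (\<lambda>a. a + 2*j) (\<lambda>a. a + 2*j) (0, 2*(b-j)-1-0) \<in> ZZ j b"
    unfolding ZZ_def insP_def by blast
  moreover have "map_prod (\<lambda>a. a + 2*j) (\<lambda>a. a + 2*j) (0, 2*(b-j)-1-0) = (2*j, 2*b-1)" using jb by simp
  ultimately show ?thesis by simp
qed

lemma ZZ_snd: "j < j' \<Longrightarrow> (j'-1-j, j+j') \<in> ZZ j' b"
proof -
  assume jj: "j < j'"
  have "(j'-1-j, 2*j'-1-(j'-1-j)) \<in> nestP j'" unfolding nestP_def using jj by force
  hence "map_prod (sh (2*j') (2*(b-j'))) (sh (2*j') (2*(b-j'))) (j'-1-j, 2*j'-1-(j'-1-j)) \<in> ZZ j' b"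
    unfolding ZZ_def insP_def by blast
  moreover have "map_prod (sh (2*j') (2*(b-j'))) (sh (2*j') (2*(b-j'))) (j'-1-j, 2*j'-1-(j'-1-j)) = (j'-1-j, j+j')"
    using jj by (simp add: sh_def)
  ultimately show ?thesis by simp
qed

lemma rep_merge: "replicate p x @ replicate q x @ r = replicate (p+q) x @ r"
  by (simp add: replicate_add)

lemma reduce:
  fixes X :: bool
  assumes "b + i \<le> a + c" "i \<le> a" "i \<le> b" "i \<le> c"
  shows "(i+1) * card (NC2 (x @ replicate (a+c-b) X @ y))
           \<le> card (NC2 (x @ replicate a X @ replicate b (\<not>X) @ replicate c X @ y))"
proof -
  define w' where "w' = x @ replicate (a+c-b) X @ y"
  define w where "w = x @ replicate a X @ replicate b (\<not>X) @ replicate c X @ y"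
  define j0 where "j0 = b - min b c"
  define J where "J = {j0..j0+i}"
  have Jv: "\<And>j. j \<in> J \<Longrightarrow> j \<le> a \<and> j \<le> b \<and> b - j \<le> c" using assms unfolding J_def j0_def by auto
  define F where "F j P = insP (length x + (a - j)) (2*b) P (ZZ j b)" for j P
  have Fin: "F j P \<in> NC2 w" if j: "j \<in> J" and P: "P \<in> NC2 w'" for j P
  proof -
    define u where "u = x @ replicate (a-j) X"
    define v where "v = replicate (c-(b-j)) X @ y"
    define z where "z = replicate j X @ replicate j (\<not>X) @ replicate (b-j) (\<not>X) @ replicate (b-j) X"
    have jv: "j \<le> a" "j \<le> b" "b - j \<le> c" using Jv[OF j] by auto
    have uv: "u @ v = w'" unfolding u_def v_def w'_def using jv
      by (simp add: rep_merge)
    have uzv: "u @ z @ v = w" unfolding u_def v_def z_def w_def using jv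
      by (simp add: rep_merge)
    have lz: "length z = 2*b" unfolding z_def using jv by simp
    have lu: "length u = length x + (a - j)" unfolding u_def by simp
    have "insP (length u) (length z) P (ZZ j b) \<in> NC2 (u @ z @ v)"
      by (rule ins_NC2) (use P uv ZZ_NC2[OF jv(2)] z_def in auto)
    thus ?thesis unfolding F_def using uzv lz lu by simp
  qed
  have Finj: "inj_on (F j) (NC2 w')" if j: "j \<in> J" for j
  proof (rule inj_onI)
    fix P1 P2 assume "P1 \<in> NC2 w'" "P2 \<in> NC2 w'" "F j P1 = F j P2"
    have jv: "j \<le> b" using Jv[OF j] by auto
    have "ZZ j b \<in> NC2 (replicate j X @ replicate j (\<not>X) @ replicate (b-j) (\<not>X) @ replicate (b-j) X)"
      by (rule ZZ_NC2[OF jv])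
    hence "\<forall>(p,q)\<in>ZZ j b. p < 2*b" unfolding NC2_def using jv
      by (auto dest!: pairing_bound)
    thus "P1 = P2" using insP_inj \<open>F j P1 = F j P2\<close> unfolding F_def by blast
  qed
  have disj: "F j ` NC2 w' \<inter> F j' ` NC2 w' = {}" if jJ: "j \<in> J" "j' \<in> J" "j < j'" for j j'
  proof (rule ccontr)
    assume "F j ` NC2 w' \<inter> F j' ` NC2 w' \<noteq> {}"
    then obtain P P' where P: "P \<in> NC2 w'" "P' \<in> NC2 w'" "F j P = F j' P'" by blast
    have jv: "j' \<le> a" "j' \<le> b" using Jv[OF jJ(2)] by auto
    define pos where "pos = length x + a + j"
    have "map_prod (\<lambda>t. t + (length x + (a - j))) (\<lambda>t. t + (length x + (a - j))) (2*j, 2*b-1) \<in> F j P"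
      unfolding F_def insP_def using ZZ_fst[of j b] jJ(3) jv(2) by (intro UnI2 imageI) simp
    hence m1: "(pos, 2*b-1 + (length x + (a - j))) \<in> F j P" unfolding pos_def using jJ jv by (simp add: add.commute add.left_commute)
    have "map_prod (\<lambda>t. t + (length x + (a - j'))) (\<lambda>t. t + (length x + (a - j'))) (j'-1-j, j+j') \<in> F j' P'"
      unfolding F_def insP_def using ZZ_snd[of j j' b] jJ(3) by (intro UnI2 imageI) simp
    hence m2: "(j'-1-j + (length x + (a - j')), pos) \<in> F j' P'" unfolding pos_def using jJ jv by (simp add: add.commute add.left_commute)
    have "F j P \<in> NC2 w" using Fin jJ P by blast
    hence "is_pairing (length w) (F j P)" unfolding NC2_def by simp
    thus False using pairing_no_both m1 m2 P(3) by metis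
  qed
  have fin: "finite J" unfolding J_def by simp
  have "card (\<Union>j\<in>J. F j ` NC2 w') = (\<Sum>j\<in>J. card (F j ` NC2 w'))"
  proof (rule card_UN_disjoint[OF fin])
    show "\<forall>j\<in>J. finite (F j ` NC2 w')" using finite_NC2 by blast
    show "\<forall>j\<in>J. \<forall>j'\<in>J. j \<noteq> j' \<longrightarrow> F j ` NC2 w' \<inter> F j' ` NC2 w' = {}"
    proof (intro ballI impI)
      fix j j' assume "j \<in> J" "j' \<in> J" "j \<noteq> j'"
      thus "F j ` NC2 w' \<inter> F j' ` NC2 w' = {}"
        using disj[of j j'] disj[of j' j] by (cases "j < j'") (auto simp: Int_commute)
    qed
  qed
  also have "\<dots> = (\<Sum>j\<in>J. card (NC2 w'))" using Finj by (intro sum.cong) (auto simp: card_image)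
  also have "\<dots> = (i+1) * card (NC2 w')" unfolding J_def by simp
  finally have eq: "card (\<Union>j\<in>J. F j ` NC2 w') = (i+1) * card (NC2 w')" .
  have "(\<Union>j\<in>J. F j ` NC2 w') \<subseteq> NC2 w" using Fin by blast
  hence "card (\<Union>j\<in>J. F j ` NC2 w') \<le> card (NC2 w)" by (intro card_mono finite_NC2)
  thus ?thesis using eq unfolding w_def w'_def by simp
qed



fun W :: "(nat\<times>nat) list \<Rightarrow> bool list" where
  "W [] = []"
| "W ((n,m)#rest) = replicate n True @ replicate m False @ W rest"

lemma word_S_W: "length ns = length ms \<Longrightarrow> word_S ns ms = W (zip ns ms)"
proof (induction ns arbitrary: ms)
  case Nil thus ?case by (simp add: word_S_def)
next
  case (Cons n ns)
  then obtain m ms' where ms: "ms = m # ms'" "length ns = length ms'" by (cases ms) auto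
  have "[0..<length (n#ns)] = 0 # map Suc [0..<length ns]"
    by (simp add: map_Suc_upt upt_conv_Cons del: upt_Suc)
  hence "word_S (n#ns) (m#ms') = replicate n True @ replicate m False @ word_S ns ms'"
    unfolding word_S_def by (simp add: comp_def)
  thus ?case using Cons.IH[OF ms(2)] ms by simp
qed

lemma main:
  "length bs = Suc k \<Longrightarrow> \<forall>p\<in>set bs. i \<le> fst p \<and> i \<le> snd p \<Longrightarrow>
   sum_list (map fst bs) = sum_list (map snd bs) \<Longrightarrow> (1+i)^k \<le> card (NC2 (W bs))"
proof (induction k arbitrary: bs)
  case 0
  then obtain n m where bs: "bs = [(n,m)]" by (cases bs) (auto simp: length_Suc_conv)
  hence nm: "n = m" using 0 by simp
  have "nestP n \<in> NC2 (W bs)" using nest_NC2[of n True] bs nm by simp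
  hence "NC2 (W bs) \<noteq> {}" by blast
  hence "card (NC2 (W bs)) \<ge> 1" using finite_NC2 by (simp add: Suc_le_eq card_gt_0_iff)
  thus ?case by simp
next
  case (Suc k)
  then obtain n1 m1 n2 m2 rest where bs: "bs = (n1,m1)#(n2,m2)#rest" "length rest = k"
    by (cases bs; cases "tl bs") (auto simp: length_Suc_conv)
  have ge: "i \<le> n1" "i \<le> m1" "i \<le> n2" "i \<le> m2" "\<forall>p\<in>set rest. i \<le> fst p \<and> i \<le> snd p"
    using Suc.prems(2) bs by auto
  have bal: "n1 + n2 + sum_list (map fst rest) = m1 + m2 + sum_list (map snd rest)"
    using Suc.prems(3) bs by simp
  show ?case
  proof (cases "m1 + i \<le> n1 + n2")
    case True
    define bs' where "bs' = (n1+n2-m1, m2) # rest"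
    have IHk: "(1+i)^k \<le> card (NC2 (W bs'))"
      by (rule Suc.IH) (use bs ge bal True in \<open>auto simp: bs'_def\<close>)
    have Bf: "(i+1) * card (NC2 ([] @ replicate (n1+n2-m1) True @ (replicate m2 False @ W rest)))
           \<le> card (NC2 ([] @ replicate n1 True @ replicate m1 (\<not>True) @ replicate n2 True @ (replicate m2 False @ W rest)))"
      by (rule reduce) (use True ge in auto)
    have e1: "W bs' = [] @ replicate (n1+n2-m1) True @ (replicate m2 False @ W rest)" by (simp add: bs'_def)
    have e2: "W bs = [] @ replicate n1 True @ replicate m1 (\<not>True) @ replicate n2 True @ (replicate m2 False @ W rest)"
      by (simp add: bs)
    have "(1+i)^Suc k = (i+1)*(1+i)^k" by simp
    also have "\<dots> \<le> (i+1) * card (NC2 (W bs'))" by (rule mult_le_mono2[OF IHk])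
    also have "\<dots> \<le> card (NC2 (W bs))" using Bf unfolding e1 e2 .
    finally show ?thesis .
  next
    case False
    hence B: "n2 + i \<le> m1 + m2" using ge by linarith
    define bs' where "bs' = (n1, m1+m2-n2) # rest"
    have IHk: "(1+i)^k \<le> card (NC2 (W bs'))"
      by (rule Suc.IH) (use bs ge bal B in \<open>auto simp: bs'_def\<close>)
    have Bf: "(i+1) * card (NC2 (replicate n1 True @ replicate (m1+m2-n2) False @ W rest))
           \<le> card (NC2 (replicate n1 True @ replicate m1 False @ replicate n2 (\<not>False) @ replicate m2 False @ W rest))"
      by (rule reduce) (use B ge in auto)
    have e1: "W bs' = replicate n1 True @ replicate (m1+m2-n2) False @ W rest" by (simp add: bs'_def)
    have e2: "W bs = replicate n1 True @ replicate m1 False @ replicate n2 (\<not>False) @ replicate m2 False @ W rest"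
      by (simp add: bs)
    have "(1+i)^Suc k = (i+1)*(1+i)^k" by simp
    also have "\<dots> \<le> (i+1) * card (NC2 (W bs'))" by (rule mult_le_mono2[OF IHk])
    also have "\<dots> \<le> card (NC2 (W bs))" using Bf unfolding e1 e2 .
    finally show ?thesis .
  qed
qed

theorem proposition3p2:
  fixes ns ms :: "nat list" and r :: nat
  assumes "r \<ge> 1"
    and "length ns = r" and "length ms = r"
    and "\<forall>k < r. ns ! k \<ge> 1 \<and> ms ! k \<ge> 1"
    and "sum_list ns = sum_list ms"
  shows "card (NC2 (word_S ns ms)) \<ge> (1 + Min (set ns \<union> set ms)) ^ (r - 1)"
proof -
  define i where "i = Min (set ns \<union> set ms)"
  obtain k where r: "r = Suc k" using assms(1) by (cases r) auto
  have ge: "\<forall>p\<in>set (zip ns ms). i \<le> fst p \<and> i \<le> snd p"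
  proof
    fix p assume p: "p \<in> set (zip ns ms)"
    obtain a b where pab: "p = (a,b)" by (cases p)
    have "a \<in> set ns" "b \<in> set ms" using p pab by (auto dest: set_zip_leftD set_zip_rightD)
    hence "i \<le> a" "i \<le> b" unfolding i_def by (simp_all add: Min_le)
    thus "i \<le> fst p \<and> i \<le> snd p" using pab by simp
  qed
  have "(1+i)^k \<le> card (NC2 (W (zip ns ms)))"
    by (rule main) (use assms r ge in auto)
  thus ?thesis using word_S_W assms r unfolding i_def by simp
qed


end
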